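(* Let $K$ be a field, $c\in K\setminus\{0\}$, $n\ge 1$, and let $f$ be a $c$-frieze of order $n$ over $K$. Put $s=f(0,n)$ and $t=f(1,n+1)$. Let $k$ be an integer with $-1\le k\le n+2$. (a) If $k$ is even, then for all $i\in\mathbb{Z}$: $f(2i,2i+k-1)=f(2i+n+3,2i+k+n+2)$ and $f(2i+1,2i+k)=f(2i+n+4,2i+k+n+3)$. (b) If $k$ is odd, then for all $i\in\mathbb{Z}$: $f(2i,2i+k-1)=\frac{(-c)^{n+1}}{t^2}f(2i+n+3,2i+k+n+2)$ and $f(2i+1,2i+k)=\frac{(-c)^{n+1}}{s^2}f(2i+n+4,2i+k+n+3)$. Furthermore, if $k$ is odd and $n$ is even, then $f(i,i+k-1)=f(i+2n+6,i+k+2n+5)$ for all $i\in\mathbb{Z}$.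
   Context: For a nonzero $c\in K$, the $c$-continuant polynomials $P_k=P_k^c$ ($k\ge -1$) are defined by $P_{-1}=0$, $P_0=1$ and, for $k\ge1$, $P_k(x_1,\dots,x_k)=x_kP_{k-1}(x_1,\dots,x_{k-1})+cP_{k-2}(x_1,\dots,x_{k-2})$. A family $(x_i)_{i\in\mathbb{Z}}$ of elements of $K$ is $n$-admissible if $P_{n+2}(x_i,\dots,x_{i+n+1})=0$ for all $i\in\mathbb{Z}$. Let $\mathbb{B}_n=\{(i,j)\in\mathbb{Z}^2:-2\le j-i\le n+1\}$. A $c$-frieze of order $n$ is a function $f:\mathbb{B}_n\to K$ for which there is an $n$-admissible family $(x_i)$ with $f(i,j)=P_{j-i+1}(x_i,\dots,x_j)$ for all $(i,j)\in\mathbb{B}_n$ (so $f(i,i-2)=0$, $f(i,i-1)=1$, $f(i,i)=x_i$). For $-1\le k\le n+2$, row $k$ of $f$ consists of the values $f(i,i+k-1)$, $i\in\mathbb{Z}$. It is known that $st=(-c)^{n+1}$, so $s,t\neq0$. *)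

theory Defs
  imports Main
begin

text \<open>c-continuant polynomials evaluated on a consecutive block of a family:
  cont c x i k = P_k(x_i, ..., x_{i+k-1}) for k >= 0.\<close>
fun cont :: "'a::field \<Rightarrow> (int \<Rightarrow> 'a) \<Rightarrow> int \<Rightarrow> nat \<Rightarrow> 'a" where
  "cont c x i 0 = 1"
| "cont c x i (Suc 0) = x i"
| "cont c x i (Suc (Suc k)) = x (i + int k + 1) * cont c x i (Suc k) + c * cont c x i k"

definition contI :: "'a::field \<Rightarrow> (int \<Rightarrow> 'a) \<Rightarrow> int \<Rightarrow> int \<Rightarrow> 'a" where
  "contI c x i k = (if k < 0 then 0 else cont c x i (nat k))"

definition admissible :: "'a::field \<Rightarrow> nat \<Rightarrow> (int \<Rightarrow> 'a) \<Rightarrow> bool" where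
  "admissible c n x \<longleftrightarrow> (\<forall>i::int. cont c x i (n + 2) = 0)"

definition in_Bn :: "nat \<Rightarrow> int \<Rightarrow> int \<Rightarrow> bool" where
  "in_Bn n i j \<longleftrightarrow> -2 \<le> j - i \<and> j - i \<le> int n + 1"

text \<open>A c-frieze of order n; f is only meaningful on B_n, its values outside are irrelevant.\<close>
definition is_frieze :: "'a::field \<Rightarrow> nat \<Rightarrow> (int \<Rightarrow> int \<Rightarrow> 'a) \<Rightarrow> bool" where
  "is_frieze c n f \<longleftrightarrow> (\<exists>x. admissible c n x \<and>
      (\<forall>i j. in_Bn n i j \<longrightarrow> f i j = contI c x i (j - i + 1)))"

end

theory Submission
  imports Defs
begin

lemma two_step_induct:
  assumes "P 0" "P (Suc 0)" "\<And>k. P k \<Longrightarrow> P (Suc k) \<Longrightarrow> P (Suc (Suc k))"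
  shows "P n"
proof -
  have "P n \<and> P (Suc n)" by (induction n) (auto intro: assms)
  thus ?thesis by simp
qed

lemma cont_first:
  "cont c x i (Suc (Suc k)) = x i * cont c x (i+1) (Suc k) + c * cont c x (i+2) k"
proof (induction k rule: two_step_induct)
  case 1 then show ?case by (simp add: algebra_simps)
next
  case 2 then show ?case by (simp add: algebra_simps)
next
  case (3 k)
  have e1: "x (i + 1 + int (Suc k) + 1) = x (i + int (Suc (Suc k)) + 1)" by (simp add: algebra_simps)
  have e2: "x (i + 2 + int k + 1) = x (i + int (Suc (Suc k)) + 1)" by (simp add: algebra_simps)
  have L: "cont c x i (Suc (Suc (Suc (Suc k)))) = x (i + int (Suc (Suc k)) + 1) * cont c x i (Suc (Suc (Suc k))) + c * cont c x i (Suc (Suc k))"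
    by (simp only: cont.simps(3))
  have R1: "cont c x (i+1) (Suc (Suc (Suc k))) = x (i + 1 + int (Suc k) + 1) * cont c x (i+1) (Suc (Suc k)) + c * cont c x (i+1) (Suc k)"
    by (simp only: cont.simps(3))
  have R2: "cont c x (i+2) (Suc (Suc k)) = x (i + 2 + int k + 1) * cont c x (i+2) (Suc k) + c * cont c x (i+2) k"
    by (simp only: cont.simps(3))
  show ?case unfolding L R1 R2 e1 e2 3 by (simp add: algebra_simps)
qed

lemma cont_det:
  "cont c x i (Suc (Suc m)) * cont c x (i+1) m - cont c x (i+1) (Suc m) * cont c x i (Suc m) = - ((-c) ^ Suc m)"
proof (induction m)
  case 0 then show ?case by (simp add: algebra_simps)
next
  case (Suc m)
  have e1: "x (i + 1 + int m + 1) = x (i + int (Suc m) + 1)" by (simp add: algebra_simps)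
  have A: "cont c x i (Suc (Suc (Suc m))) = x (i + int (Suc m) + 1) * cont c x i (Suc (Suc m)) + c * cont c x i (Suc m)"
    by (simp only: cont.simps(3))
  have B: "cont c x (i+1) (Suc (Suc m)) = x (i + 1 + int m + 1) * cont c x (i+1) (Suc m) + c * cont c x (i+1) m"
    by (simp only: cont.simps(3))
  have "cont c x i (Suc (Suc (Suc m))) * cont c x (i+1) (Suc m) - cont c x (i+1) (Suc (Suc m)) * cont c x i (Suc (Suc m))
     = - c * (cont c x i (Suc (Suc m)) * cont c x (i+1) m - cont c x (i+1) (Suc m) * cont c x i (Suc m))"
    unfolding A B e1 by (simp add: algebra_simps)
  also have "\<dots> = - ((-c) ^ Suc (Suc m))" unfolding Suc by simp
  finally show ?case .
qed

lemma cont_shift: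
  "cont c (\<lambda>j. x (j + d)) i k = cont c x (i + d) k"
  by (induction k rule: two_step_induct) (simp_all add: algebra_simps)

lemma cont_scale:
  assumes y: "\<And>j. y j = (if even j then p else q) * x j" and pq: "p * q = 1"
  shows "cont c y i k = (if odd k then (if even i then p else q) else 1) * cont c x i k"
proof (induction k rule: two_step_induct)
  case 1 then show ?case by simp
next
  case 2 then show ?case by (simp add: y)
next
  case (3 k)
  have yy: "y (i + int k + 1) = (if even (i + int k + 1) then p else q) * x (i + int k + 1)" by (rule y)
  show ?case
  proof (cases "even k")
    case True
    then have "even (i + int k + 1) = odd i" by simp
    then show ?thesis using 3 True pq unfolding cont.simps(3) yy
      by (auto simp: algebra_simps)
  next
    case False
    then have "even (i + int k + 1) = even i" by simp
    then show ?thesis using 3 False pq unfolding cont.simps(3) yy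
      by (auto simp: algebra_simps)
  qed
qed

theorem mainTheorem1:
  fixes c :: "'a::field" and n :: nat and f :: "int \<Rightarrow> int \<Rightarrow> 'a" and k :: int
  assumes hc: "c \<noteq> 0" and hn: "n \<ge> 1" and hf: "is_frieze c n f"
    and hk: "-1 \<le> k" "k \<le> int n + 2"
  defines "s \<equiv> f 0 (int n)" and "t \<equiv> f 1 (int n + 1)"
  shows "(even k \<longrightarrow> (\<forall>i::int.
            f (2*i) (2*i + k - 1) = f (2*i + int n + 3) (2*i + k + int n + 2) \<and>
            f (2*i + 1) (2*i + k) = f (2*i + int n + 4) (2*i + k + int n + 3)))
       \<and> (odd k \<longrightarrow> (\<forall>i::int.
            f (2*i) (2*i + k - 1) = ((-c)^(n+1) / t^2) * f (2*i + int n + 3) (2*i + k + int n + 2) \<and>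
            f (2*i + 1) (2*i + k) = ((-c)^(n+1) / s^2) * f (2*i + int n + 4) (2*i + k + int n + 3)))
       \<and> (odd k \<and> even n \<longrightarrow> (\<forall>i::int.
            f i (i + k - 1) = f (i + 2 * int n + 6) (i + k + 2 * int n + 5)))"
proof -
  obtain x where adm: "admissible c n x" and fx: "\<And>i j. in_Bn n i j \<Longrightarrow> f i j = contI c x i (j - i + 1)"
    using hf unfolding is_frieze_def by blast
  have z: "\<And>i. cont c x i (Suc (Suc n)) = 0" using adm unfolding admissible_def
    by (metis add_2_eq_Suc')
  define a where "a j = cont c x j (Suc n)" for j
  have prod: "a j * a (j+1) = (-c)^(n+1)" for j
  proof -
    have "cont c x j (Suc (Suc n)) * cont c x (j+1) n - a (j+1) * a j = - ((-c) ^ Suc n)"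
      using cont_det[of c x j n] unfolding a_def .
    then show ?thesis unfolding z by (simp del: cont.simps power_Suc add: algebra_simps)
  qed
  have nz: "a j \<noteq> 0" for j
    using prod[of j] hc by auto
  have par: "a j = (if even j then a 0 else a 1)" for j
  proof (induction j rule: int_induct[where k=0])
    case base then show ?case by simp
  next
    case (step1 i)
    have "a (i+1) = (-c)^(n+1) / a i" using prod[of i] nz[of i] by (simp add: field_simps)
    moreover have "a 1 = (-c)^(n+1) / a 0" using prod[of 0] nz[of 0] by (simp add: field_simps)
    moreover have "a 0 = (-c)^(n+1) / a 1" using prod[of 0] nz[of 1] by (simp add: field_simps)
    ultimately show ?case using step1 by (auto split: if_splits)
  next
    case (step2 i)
    have "a (i-1) = (-c)^(n+1) / a i" using prod[of "i-1"] nz[of i] by (simp add: field_simps)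
    moreover have "a 1 = (-c)^(n+1) / a 0" using prod[of 0] nz[of 0] by (simp add: field_simps)
    moreover have "a 0 = (-c)^(n+1) / a 1" using prod[of 0] nz[of 1] by (simp add: field_simps)
    ultimately show ?case using step2 by (auto split: if_splits)
  qed
  have per2: "a (j+2) = a j" for j using par[of j] par[of "j+2"] by simp
  have xrel: "x (j + int n + 3) * a j = x j * a (j+1)" for j
  proof -
    have E1: "0 = x j * a (j+1) + c * cont c x (j+2) n"
      using cont_first[of c x j n] z[of j] unfolding a_def by simp
    have E2: "0 = x (j + 2 + int n + 1) * a (j+2) + c * cont c x (j+2) n"
      using cont.simps(3)[of c x "j+2" n] z[of "j+2"] unfolding a_def by simp
    have idx: "j + 2 + int n + 1 = j + int n + 3" by simp
    have h2: "x (j + int n + 3) * a j + c * cont c x (j+2) n = 0" using E2 unfolding idx per2 by simp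
    have h1: "x j * a (j+1) + c * cont c x (j+2) n = 0" using E1 by simp
    show ?thesis using h1 h2 by (metis add_right_cancel)
  qed
  define p where "p = a 1 / a 0"
  define q where "q = a 0 / a 1"
  have pq: "p * q = 1" unfolding p_def q_def using nz[of 0] nz[of 1] by simp
  have y: "x (j + int (n+3)) = (if even j then p else q) * x j" for j
  proof -
    have "x (j + int (n+3)) = x j * a (j+1) / a j" using xrel[of j] nz[of j]
      by (simp add: field_simps)
    also have "\<dots> = (if even j then p else q) * x j"
      using par[of j] par[of "j+1"] unfolding p_def q_def by simp
    finally show ?thesis .
  qed
  have Gc: "cont c x (i + int (n+3)) m = (if odd m then (if even i then p else q) else 1) * cont c x i m" for i m
    using cont_shift[of c x "int (n+3)" i m, symmetric] cont_scale[of "\<lambda>j. x (j + int (n+3))" p q x, OF y pq]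
    by simp
  have G: "contI c x (i + int n + 3) k = (if odd k then (if even i then p else q) else 1) * contI c x i k" for i
  proof (cases "k < 0")
    case True then show ?thesis unfolding contI_def by simp
  next
    case False
    have "i + int n + 3 = i + int (n+3)" by simp
    then show ?thesis unfolding contI_def using False Gc[of i "nat k"] by (simp add: even_nat_iff add.assoc)
  qed
  have fv: "f i j = contI c x i k" if "j = i + k - 1" for i j
    using fx[of i j] that hk unfolding in_Bn_def by simp
  have sv: "s = a 0" unfolding s_def a_def using fx[of 0 "int n"] by (simp add: in_Bn_def contI_def nat_add_distrib)
  have tv: "t = a 1" unfolding t_def a_def using fx[of 1 "int n + 1"] by (simp add: in_Bn_def contI_def nat_add_distrib)
  have cc: "(-c)^(n+1) = a 0 * a 1" using prod[of 0] by simp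
  have A: "f (2*i) (2*i + k - 1) = contI c x (2*i) k" for i by (rule fv) simp
  have B: "f (2*i + int n + 3) (2*i + k + int n + 2) = (if odd k then p else 1) * contI c x (2*i) k" for i
  proof -
    have "f (2*i + int n + 3) (2*i + k + int n + 2) = contI c x (2*i + int n + 3) k" by (rule fv) simp
    then show ?thesis using G[of "2*i"] by simp
  qed
  have C: "f (2*i + 1) (2*i + k) = contI c x (2*i+1) k" for i by (rule fv) simp
  have D: "f (2*i + int n + 4) (2*i + k + int n + 3) = (if odd k then q else 1) * contI c x (2*i+1) k" for i
  proof -
    have e: "2*i + int n + 4 = (2*i + 1) + int n + 3" by simp
    have "f (2*i + int n + 4) (2*i + k + int n + 3) = contI c x ((2*i + 1) + int n + 3) k"
      unfolding e by (rule fv) simp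
    then show ?thesis using G[of "2*i+1"] by simp
  qed
  have n0: "a 0 \<noteq> 0" "a 1 \<noteq> 0" using nz by auto
  have P1: "even k \<longrightarrow> (\<forall>i::int.
            f (2*i) (2*i + k - 1) = f (2*i + int n + 3) (2*i + k + int n + 2) \<and>
            f (2*i + 1) (2*i + k) = f (2*i + int n + 4) (2*i + k + int n + 3))"
    using A B C D by simp
  have P2: "odd k \<longrightarrow> (\<forall>i::int.
            f (2*i) (2*i + k - 1) = ((-c)^(n+1) / t^2) * f (2*i + int n + 3) (2*i + k + int n + 2) \<and>
            f (2*i + 1) (2*i + k) = ((-c)^(n+1) / s^2) * f (2*i + int n + 4) (2*i + k + int n + 3))"
    using A B C D n0 unfolding cc sv tv p_def q_def by (simp add: field_simps power2_eq_square)
  have P3: "odd k \<and> even n \<longrightarrow> (\<forall>i::int.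
            f i (i + k - 1) = f (i + 2 * int n + 6) (i + k + 2 * int n + 5))"
  proof (intro impI allI)
    fix i assume h: "odd k \<and> even n"
    have e: "i + 2 * int n + 6 = (i + int n + 3) + int n + 3" by simp
    have "f (i + 2 * int n + 6) (i + k + 2 * int n + 5) = contI c x ((i + int n + 3) + int n + 3) k"
      unfolding e by (rule fv) simp
    also have "\<dots> = contI c x i k"
      using G[of "i + int n + 3"] G[of i] h pq by (auto simp: algebra_simps)
    also have "\<dots> = f i (i + k - 1)" by (rule fv[symmetric]) simp
    finally show "f i (i + k - 1) = f (i + 2 * int n + 6) (i + k + 2 * int n + 5)" ..
  qed
  show ?thesis using P1 P2 P3 by blast
qed

end
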